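(* Let $U$ be a subgroup of $\mathbf{T}/\{\pm1\}$ with at least three elements. Then $R(U)$ is a subring of $\mathbb{C}$ (closed under addition, negation and multiplication, and containing $0$ and $1$). Moreover, $R(U)$ is exactly the set of finite $\mathbb{Z}$-linear combinations of finite products of complex numbers of the form $$\frac{1-u^2}{1-v^2},$$ where $u,v\in\mathbf{T}$ are representatives of elements of $U$ and $v^2\neq 1$. (The value $u^2$ does not depend on the choice of representative.) Equivalently, setting $V=\{u^2: u\in\mathbf{T} \text{ represents an element of } U\}\subset\mathbf{T}$, $R(U)$ is the set of finite $\mathbb{Z}$-linear combinations of finite products of numbers $\frac{1-a}{1-b}$ with $a,b\in V$, $b\neq 1$.
   Context: Let $\mathbf{T}=\{z\in\mathbb{C}:|z|=1\}$. An angle is an element of the quotient group $\mathbf{T}/\{\pm1\}$; in formulas an angle is represented by either of its two representatives $u\in\mathbf{T}$. For $p\in\mathbb{C}$ and an angle $u$, let $L_u(p)=\{p+ru: r\in\mathbb{R}\}$ (the line through $p$ with direction $u$). For distinct angles $u,v$ and $p,q\in\mathbb{C}$, $I_{u,v}(p,q)$ denotes the unique point of $L_u(p)\cap L_v(q)$. For a subgroup $U$ of $\mathbf{T}/\{\pm1\}$, $R(U)$ denotes the smallest subset of $\mathbb{C}$ that contains $0$ and $1$ and such that $I_{u,v}(p,q)\in R(U)$ whenever $p,q\in R(U)$ and $u,v$ are distinct elements of $U$. *)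

theory Defs
  imports Complex_Main
begin

text \<open>An angle (element of T/{+-1}) is represented by either representative u with |u| = 1.
  A subgroup U of T/{+-1} is represented by its full preimage W in T, i.e. a subgroup of the
  circle group T containing -1.\<close>

definition angle_subgroup :: "complex set \<Rightarrow> bool" where
  "angle_subgroup W \<longleftrightarrow> (\<forall>u\<in>W. norm u = 1) \<and> 1 \<in> W \<and> -1 \<in> W \<and>
     (\<forall>u\<in>W. \<forall>v\<in>W. u * v \<in> W) \<and> (\<forall>u\<in>W. inverse u \<in> W)"

definition same_angle :: "complex \<Rightarrow> complex \<Rightarrow> bool" where
  "same_angle u v \<longleftrightarrow> u = v \<or> u = - v"

definition line :: "complex \<Rightarrow> complex \<Rightarrow> complex set" where
  "line u p = {p + complex_of_real r * u | r. True}"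

definition isect :: "complex \<Rightarrow> complex \<Rightarrow> complex \<Rightarrow> complex \<Rightarrow> complex" where
  "isect u v p q = (THE z. z \<in> line u p \<inter> line v q)"

inductive_set RU :: "complex set \<Rightarrow> complex set" for W :: "complex set" where
  zero: "0 \<in> RU W"
| one: "1 \<in> RU W"
| isect: "\<lbrakk>p \<in> RU W; q \<in> RU W; u \<in> W; v \<in> W; \<not> same_angle u v\<rbrakk>
           \<Longrightarrow> isect u v p q \<in> RU W"

definition is_subring :: "complex set \<Rightarrow> bool" where
  "is_subring S \<longleftrightarrow> 0 \<in> S \<and> 1 \<in> S \<and> (\<forall>x\<in>S. \<forall>y\<in>S. x + y \<in> S) \<and>
     (\<forall>x\<in>S. - x \<in> S) \<and> (\<forall>x\<in>S. \<forall>y\<in>S. x * y \<in> S)"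

definition int_comb_prods :: "complex set \<Rightarrow> complex set" where
  "int_comb_prods G = {z. \<exists>(n::nat) (c::nat \<Rightarrow> int) (m::nat \<Rightarrow> nat) (g::nat \<Rightarrow> nat \<Rightarrow> complex).
       (\<forall>i<n. \<forall>j<m i. g i j \<in> G) \<and> z = (\<Sum>i<n. of_int (c i) * (\<Prod>j<m i. g i j))}"

end

theory Submission imports Defs begin

definition FF :: "complex \<Rightarrow> complex \<Rightarrow> complex \<Rightarrow> complex \<Rightarrow> complex" where
  "FF u v p q = p + u^2 * ((q - p) - v^2 * cnj (q - p)) / (u^2 - v^2)"

lemma cnj_unit: "norm u = 1 \<Longrightarrow> cnj u = inverse u"
proof -
  assume "norm u = 1"
  then have "u * cnj u = 1" using complex_norm_square[of u] by simp
  then show ?thesis by (metis inverse_unique)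
qed

lemma real_of_cnj: "cnj x = x \<Longrightarrow> \<exists>r. x = complex_of_real r"
  by (metis Reals_cases Reals_cnj_iff)

lemma FF_line: assumes "norm u = 1" "norm v = 1" "u^2 \<noteq> v^2"
  shows "FF u v p q \<in> line u p"
proof -
  have u0: "u \<noteq> 0" using assms by auto
  have v0: "v \<noteq> 0" using assms by auto
  define d where "d = q - p"
  define x where "x = u * (d - v^2 * cnj d) / (u^2 - v^2)"
  have cu: "cnj u = inverse u" "cnj v = inverse v" using assms cnj_unit by auto
  have d: "u^2 - v^2 \<noteq> 0" using assms by auto
  have "cnj x = inverse u * (cnj d - (inverse v)^2 * d) / ((inverse u)^2 - (inverse v)^2)"
    by (simp add: x_def cu)
  also have "... = (inverse u * (cnj d - (inverse v)^2 * d) * (u^2*v^2)) / (v^2 - u^2)"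
  proof -
    have h: "(inverse u)^2 - (inverse v)^2 = (v^2 - u^2) / (u^2 * v^2)" using u0 v0
      by (simp add: field_simps)
    show ?thesis by (simp add: h)
  qed
  also have "inverse u * (cnj d - (inverse v)^2 * d) * (u^2*v^2) = - (u * (d - v^2 * cnj d))"
    using u0 v0 by (simp add: field_simps power2_eq_square)
  also have "v^2 - u^2 = - (u^2 - v^2)" by simp
  also have "- (u * (d - v^2 * cnj d)) / - (u^2 - v^2) = x" unfolding x_def
    by (simp only: minus_divide_divide)
  finally have "cnj x = x" .
  then obtain r where r: "x = complex_of_real r" using real_of_cnj by blast
  have "FF u v p q = p + x * u" unfolding FF_def x_def d_def using d
    by (simp add: field_simps power2_eq_square)
  then show ?thesis unfolding line_def r by (auto simp: mult.commute)
qed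

lemma FF_sym: assumes "u^2 \<noteq> v^2" shows "FF u v p q = FF v u q p"
proof -
  have d: "u^2 - v^2 \<noteq> 0" "v^2 - u^2 \<noteq> 0" using assms by auto
  show ?thesis unfolding FF_def using d
    by (simp add: field_simps)
qed

lemma unit_real_eq: assumes "norm u = 1" "norm v = 1" "u^2 \<noteq> v^2"
  and "complex_of_real a * u = complex_of_real b * v" shows "a = 0"
proof (rule ccontr)
  assume a: "a \<noteq> 0"
  have "u = inverse (complex_of_real a) * (complex_of_real a * u)" using a by simp
  also have "... = complex_of_real (b/a) * v" unfolding assms(4)
    by (simp add: divide_inverse mult.commute mult.left_commute)
  finally have ueq: "u = complex_of_real (b/a) * v" .
  then have "norm u = \<bar>b/a\<bar> * norm v" by (metis norm_mult norm_of_real)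
  then have "\<bar>b/a\<bar> = 1" using assms(1,2) by (metis mult.right_neutral)
  then have "b/a = 1 \<or> b/a = -1" by (metis abs_1 abs_minus_cancel abs_eq_iff)
  then have "u = v \<or> u = -v" using ueq by (metis mult_1 mult_minus1 of_real_1 of_real_minus)
  then show False using assms(3) by auto
qed

lemma isect_formula: assumes "norm u = 1" "norm v = 1" "u^2 \<noteq> v^2"
  shows "isect u v p q = FF u v p q"
  unfolding isect_def
proof (rule the_equality)
  show "FF u v p q \<in> line u p \<inter> line v q"
    using FF_line[OF assms] FF_line[of v u q p] assms FF_sym[OF assms(3)] by auto
  fix z assume z: "z \<in> line u p \<inter> line v q"
  have F: "FF u v p q \<in> line u p \<inter> line v q"
    using FF_line[OF assms] FF_line[of v u q p] assms FF_sym[OF assms(3)] by auto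
  have l: "\<And>z u p. z \<in> line u p \<Longrightarrow> \<exists>r. z = p + complex_of_real r * u"
    unfolding line_def by blast
  obtain r1 where "z = p + complex_of_real r1 * u" using l z by blast
  moreover obtain r2 where "z = q + complex_of_real r2 * v" using l z by blast
  moreover obtain s1 where "FF u v p q = p + complex_of_real s1 * u" using l F by blast
  moreover obtain s2 where "FF u v p q = q + complex_of_real s2 * v" using l F by blast
  ultimately have "complex_of_real (r1 - s1) * u = complex_of_real (r2 - s2) * v"
  proof -
    assume a: "z = p + complex_of_real r1 * u" "z = q + complex_of_real r2 * v"
       "FF u v p q = p + complex_of_real s1 * u" "FF u v p q = q + complex_of_real s2 * v"
    have "complex_of_real (r1 - s1) * u = z - FF u v p q" using a(1,3) by (simp add: algebra_simps)
    also have "... = complex_of_real (r2 - s2) * v" using a(2,4) by (simp add: algebra_simps)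
    finally show ?thesis .
  qed
  then have "r1 - s1 = 0" using unit_real_eq assms by blast
  then show "z = FF u v p q" using \<open>z = p + _\<close> \<open>FF u v p q = p + _\<close> by simp
qed

lemma isect_trans: assumes "norm u = 1" "norm v = 1" "u^2 \<noteq> v^2"
  shows "isect u v (p + t) (q + t) = isect u v p q + t"
  using assms by (simp add: isect_formula FF_def)

lemma isect_scale: assumes "norm u = 1" "norm v = 1" "u^2 \<noteq> v^2" "norm w = 1"
  shows "isect (w*u) (w*v) (complex_of_real r * w * p) (complex_of_real r * w * q)
         = complex_of_real r * w * isect u v p q"
proof -
  have w0: "w \<noteq> 0" using assms by auto
  have n: "norm (w*u) = 1" "norm (w*v) = 1" using assms by (simp_all add: norm_mult)
  have s: "(w*u)^2 \<noteq> (w*v)^2" using assms w0 by (simp add: power_mult_distrib)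
  have cw: "cnj w = inverse w" using cnj_unit assms by auto
  have d: "u^2 - v^2 \<noteq> 0" using assms by auto
  have d2: "(w*u)^2 - (w*v)^2 = w^2 * (u^2 - v^2)" by (simp add: algebra_simps power_mult_distrib)
  define l where "l = complex_of_real r * w"
  define X where "X = (q - p) - v^2 * cnj (q - p)"
  have c: "cnj (l*q - l*p) = complex_of_real r * inverse w * cnj (q - p)"
    unfolding l_def by (simp add: cw algebra_simps)
  have e: "l*q - l*p - (w*v)^2 * cnj (l*q - l*p) = l * X"
    unfolding c unfolding l_def X_def using w0 by (simp add: field_simps power2_eq_square)
  have "FF (w*u) (w*v) (l*p) (l*q) = l*p + (w^2 * u^2) * (l * X) / (w^2 * (u^2 - v^2))"
    unfolding FF_def e[symmetric] d2 by (simp add: power_mult_distrib)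
  also have "... = l*p + l * (u^2 * X / (u^2 - v^2))"
    using w0 by (simp add: mult.left_commute)
  also have "... = l * FF u v p q" unfolding FF_def X_def by (simp add: algebra_simps)
  finally show ?thesis
    unfolding isect_formula[OF n s] isect_formula[OF assms(1-3)] l_def by simp
qed

inductive_set gen :: "complex set \<Rightarrow> complex set" for G :: "complex set" where
  g0: "0 \<in> gen G"
| g1: "1 \<in> gen G"
| gadd: "x \<in> gen G \<Longrightarrow> y \<in> gen G \<Longrightarrow> x + y \<in> gen G"
| gneg: "x \<in> gen G \<Longrightarrow> - x \<in> gen G"
| gmul: "g \<in> G \<Longrightarrow> x \<in> gen G \<Longrightarrow> g * x \<in> gen G"

lemma gen_mult: "x \<in> gen G \<Longrightarrow> y \<in> gen G \<Longrightarrow> x * y \<in> gen G"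
proof (induction x rule: gen.induct)
  case (gmul g x)
  then show ?case using gen.gmul[of g G "x*y"] by (simp add: mult.assoc)
qed (auto simp: distrib_right intro: gen.intros)

lemma gen_diff: "x \<in> gen G \<Longrightarrow> y \<in> gen G \<Longrightarrow> x - y \<in> gen G"
  using gadd gneg by (metis diff_conv_add_uminus)

lemma gen_int: "x \<in> gen G \<Longrightarrow> of_int c * x \<in> gen G"
proof -
  assume x: "x \<in> gen G"
  have n: "of_nat n * x \<in> gen G" for n
    by (induction n) (auto simp: distrib_right intro: gen.intros x)
  show ?thesis
  proof (cases "c \<ge> 0")
    case True
    then have "c = int (nat c)" by simp
    then obtain n where "c = int n" by blast
    then show ?thesis using n by simp
  next
    case False
    then have "c = - int (nat (-c))" by simp
    then obtain n where "c = - int n" by blast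
    then show ?thesis using gneg[OF n[of n]] by simp
  qed
qed

lemma ICP_sub_gen: "int_comb_prods G \<subseteq> gen G"
proof
  fix z assume "z \<in> int_comb_prods G"
  then have "\<exists>(n::nat) (c::nat\<Rightarrow>int) (m::nat\<Rightarrow>nat) (g::nat\<Rightarrow>nat\<Rightarrow>complex). (\<forall>i<n. \<forall>j<m i. g i j \<in> G) \<and> z = (\<Sum>i<n. of_int (c i) * (\<Prod>j<m i. g i j))"
    unfolding int_comb_prods_def by simp
  then obtain n :: nat and c :: "nat \<Rightarrow> int" and m :: "nat \<Rightarrow> nat" and g :: "nat \<Rightarrow> nat \<Rightarrow> complex" where g: "\<forall>i<n. \<forall>j<m i. g i j \<in> G"
    and z: "z = (\<Sum>i<n. of_int (c i) * (\<Prod>j<m i. g i j))"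
    by blast
  have p: "\<And>i k. i < n \<Longrightarrow> k \<le> m i \<Longrightarrow> (\<Prod>j<k. g i j) \<in> gen G"
  proof -
    fix i k assume i: "i < n" show "k \<le> m i \<Longrightarrow> (\<Prod>j<k. g i j) \<in> gen G"
    proof (induction k)
      case 0 then show ?case by (simp add: g1)
    next
      case (Suc k)
      then have "g i k \<in> G" using g i by auto
      then show ?case using Suc gmul[of "g i k" G "\<Prod>j<k. g i j"] by (simp add: mult.commute)
    qed
  qed
  have "k \<le> n \<Longrightarrow> (\<Sum>i<k. of_int (c i) * (\<Prod>j<m i. g i j)) \<in> gen G" for k
  proof (induction k)
    case 0 then show ?case by (simp add: g0)
  next
    case (Suc k)
    then have "of_int (c k) * (\<Prod>j<m k. g k j) \<in> gen G" using gen_int p[of k "m k"] by simp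
    then show ?case using Suc gadd by simp
  qed
  then show "z \<in> gen G" using z by simp
qed

lemma ICP_intro:
  fixes n :: nat and c :: "nat \<Rightarrow> int" and m :: "nat \<Rightarrow> nat" and g :: "nat \<Rightarrow> nat \<Rightarrow> complex"
  shows "(\<forall>i<n. \<forall>j<m i. g i j \<in> G) \<Longrightarrow> z = (\<Sum>i<n. of_int (c i) * (\<Prod>j<m i. g i j)) \<Longrightarrow> z \<in> int_comb_prods G"
  unfolding int_comb_prods_def by blast

lemma ICP_elim: assumes "z \<in> int_comb_prods G"
  obtains n :: nat and c :: "nat \<Rightarrow> int" and m :: "nat \<Rightarrow> nat" and g :: "nat \<Rightarrow> nat \<Rightarrow> complex"
  where "\<forall>i<n. \<forall>j<m i. g i j \<in> G" "z = (\<Sum>i<n. of_int (c i) * (\<Prod>j<m i. g i j))"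
proof -
  have "\<exists>(n::nat) (c::nat\<Rightarrow>int) (m::nat\<Rightarrow>nat) (g::nat\<Rightarrow>nat\<Rightarrow>complex). (\<forall>i<n. \<forall>j<m i. g i j \<in> G) \<and> z = (\<Sum>i<n. of_int (c i) * (\<Prod>j<m i. g i j))"
    using assms unfolding int_comb_prods_def by simp
  then show ?thesis using that by blast
qed

lemma ICP_0: "0 \<in> int_comb_prods G"
  by (rule ICP_intro[where n=0]) auto

lemma ICP_1: "1 \<in> int_comb_prods G"
  by (rule ICP_intro[where n=1 and m="\<lambda>_. 0" and c="\<lambda>_. 1"]) auto

lemma ICP_neg: assumes "z \<in> int_comb_prods G" shows "- z \<in> int_comb_prods G"
proof -
  obtain n :: nat and c :: "nat \<Rightarrow> int" and m :: "nat \<Rightarrow> nat" and g :: "nat \<Rightarrow> nat \<Rightarrow> complex" where g: "\<forall>i<n. \<forall>j<m i. g i j \<in> G" and z: "z = (\<Sum>i<n. of_int (c i) * (\<Prod>j<m i. g i j))"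
    by (rule ICP_elim[OF assms]) blast
  show ?thesis
    by (rule ICP_intro[where n=n and m=m and g=g and c="\<lambda>i. - c i"]) (auto simp: g z sum_negf[symmetric])
qed

lemma ICP_mul: assumes "z \<in> int_comb_prods G" "h \<in> G" shows "h * z \<in> int_comb_prods G"
proof -
  obtain n :: nat and c :: "nat \<Rightarrow> int" and m :: "nat \<Rightarrow> nat" and g :: "nat \<Rightarrow> nat \<Rightarrow> complex" where g: "\<forall>i<n. \<forall>j<m i. g i j \<in> G" and z: "z = (\<Sum>i<n. of_int (c i) * (\<Prod>j<m i. g i j))"
    by (rule ICP_elim[OF assms(1)]) blast
  define g' where "g' i j = (if j < m i then g i j else h)" for i j
  have p: "(\<Prod>j<Suc (m i). g' i j) = h * (\<Prod>j<m i. g i j)" for i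
    by (simp add: g'_def mult.commute)
  show ?thesis
  proof (rule ICP_intro[where n=n and m="\<lambda>i. Suc (m i)" and g=g' and c=c])
    show "\<forall>i<n. \<forall>j<Suc (m i). g' i j \<in> G" using g assms(2) by (auto simp: g'_def less_Suc_eq)
    show "h * z = (\<Sum>i<n. of_int (c i) * (\<Prod>j<Suc (m i). g' i j))"
      unfolding p z by (simp add: sum_distrib_left mult.left_commute)
  qed
qed

lemma ICP_add_term: fixes k :: nat and h :: "nat \<Rightarrow> complex" assumes "z \<in> int_comb_prods G" "\<forall>j<k. h j \<in> G"
  shows "z + of_int c0 * (\<Prod>j<k. h j) \<in> int_comb_prods G"
proof -
  obtain n :: nat and c :: "nat \<Rightarrow> int" and m :: "nat \<Rightarrow> nat" and g :: "nat \<Rightarrow> nat \<Rightarrow> complex" where g: "\<forall>i<n. \<forall>j<m i. g i j \<in> G" and z: "z = (\<Sum>i<n. of_int (c i) * (\<Prod>j<m i. g i j))"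
    by (rule ICP_elim[OF assms(1)]) blast
  show ?thesis
  proof (rule ICP_intro[where n="Suc n" and m="m(n := k)" and g="g(n := h)" and c="c(n := c0)"])
    show "\<forall>i<Suc n. \<forall>j<(m(n := k)) i. (g(n := h)) i j \<in> G" using g assms(2) by (auto simp: less_Suc_eq)
    have "(\<Sum>i<n. of_int ((c(n := c0)) i) * (\<Prod>j<(m(n := k)) i. (g(n := h)) i j))
        = (\<Sum>i<n. of_int (c i) * (\<Prod>j<m i. g i j))"
      by (rule sum.cong) auto
    then show "z + of_int c0 * (\<Prod>j<k. h j) = (\<Sum>i<Suc n. of_int ((c(n := c0)) i) * (\<Prod>j<(m(n := k)) i. (g(n := h)) i j))"
      by (simp add: z)
  qed
qed

lemma ICP_add: assumes "z \<in> int_comb_prods G" "y \<in> int_comb_prods G" shows "z + y \<in> int_comb_prods G"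
proof -
  obtain n :: nat and c :: "nat \<Rightarrow> int" and m :: "nat \<Rightarrow> nat" and g :: "nat \<Rightarrow> nat \<Rightarrow> complex" where g: "\<forall>i<n. \<forall>j<m i. g i j \<in> G" and y: "y = (\<Sum>i<n. of_int (c i) * (\<Prod>j<m i. g i j))"
    by (rule ICP_elim[OF assms(2)]) blast
  have "k \<le> n \<Longrightarrow> z + (\<Sum>i<k. of_int (c i) * (\<Prod>j<m i. g i j)) \<in> int_comb_prods G" for k
  proof (induction k)
    case 0 then show ?case using assms(1) by simp
  next
    case (Suc k)
    then have "z + (\<Sum>i<k. of_int (c i) * (\<Prod>j<m i. g i j)) + of_int (c k) * (\<Prod>j<m k. g k j) \<in> int_comb_prods G"
      using Suc g by (intro ICP_add_term) auto
    then show ?case by (simp add: add.assoc)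
  qed
  then show ?thesis using y by simp
qed

lemma ICP_eq_gen: "int_comb_prods G = gen G"
proof
  show "gen G \<subseteq> int_comb_prods G"
  proof
    fix x assume "x \<in> gen G" then show "x \<in> int_comb_prods G"
      by (induction x rule: gen.induct) (auto intro: ICP_0 ICP_1 ICP_add ICP_neg ICP_mul)
  qed
qed (rule ICP_sub_gen)

definition PP :: "complex \<Rightarrow> complex \<Rightarrow> complex \<Rightarrow> complex" where
  "PP a b z = a * (z - b * cnj z) / (a - b)"

lemma cnj_PP: assumes "cnj a = inverse a" "cnj b = inverse b" "a \<noteq> 0" "b \<noteq> 0" "a \<noteq> b"
  shows "cnj (PP a b z) = (b * cnj z - z) / (b - a)"
proof -
  have e: "inverse a - inverse b = (b - a) / (a * b)" using assms by (simp add: field_simps)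
  have d: "b - a \<noteq> 0" using assms by simp
  have "cnj (PP a b z) = inverse a * (cnj z - inverse b * z) / (inverse a - inverse b)"
    unfolding PP_def by (simp add: assms)
  also have "... = (inverse a * (cnj z - inverse b * z) * (a * b)) / (b - a)"
    unfolding e using assms by simp
  also have "inverse a * (cnj z - inverse b * z) * (a * b) = b * cnj z - z"
    using assms by (simp add: field_simps)
  finally show ?thesis .
qed

lemma div_eq_div: "(y::complex) \<noteq> 0 \<Longrightarrow> z \<noteq> 0 \<Longrightarrow> x * z = w * y \<Longrightarrow> x / y = w / z"
  by (simp add: frac_eq_eq)

lemma calc_m1: assumes "cnj b = inverse b" "cnj c = inverse c" "b \<noteq> 0" "c \<noteq> 0"
  "b \<noteq> c" "b \<noteq> 1" "c \<noteq> 1"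
  shows "PP 1 b (PP c 1 (PP b c 1)) = -1"
proof -
  have d: "b - c \<noteq> 0" "c - b \<noteq> 0" "c - 1 \<noteq> 0" "1 - c \<noteq> 0" "1 - b \<noteq> 0" "b - 1 \<noteq> 0"
    using assms by auto
  define A where "A = PP b c 1"
  have A: "A = b * (1 - c) / (b - c)" unfolding A_def PP_def by simp
  have cA: "cnj A = (c - 1) / (c - b)" unfolding A_def using cnj_PP[of b c 1] assms by simp
  have AcA: "A - cnj A = (1 - c) * (b - 1) / (b - c)"
  proof -
    have "cnj A = (1 - c) / (b - c)" unfolding cA by (metis minus_diff_eq minus_divide_divide)
    then have "A - cnj A = (b * (1 - c) - (1 - c)) / (b - c)" unfolding A by (simp add: diff_divide_distrib)
    then show ?thesis by (simp add: algebra_simps)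
  qed
  define B where "B = PP c 1 A"
  have B: "B = c * (1 - b) / (b - c)"
  proof -
    have "B = c * ((1 - c) * (b - 1) / (b - c)) / (c - 1)" unfolding B_def PP_def using AcA by simp
    also have "... = (c * ((1 - c) * (b - 1))) / ((b - c) * (c - 1))" by simp
    also have "... = c * (1 - b) / (b - c)" by (rule div_eq_div, use d in simp, use d in simp, simp add: algebra_simps)
    finally show ?thesis .
  qed
  have cB: "cnj B = (1 - b) / (b - c)"
  proof -
    have "cnj B = (cnj A - A) / (1 - c)" unfolding B_def using cnj_PP[of c 1 A] assms by simp
    also have "cnj A - A = - ((1 - c) * (b - 1) / (b - c))" using AcA by (simp add: algebra_simps)
    also have "- ((1 - c) * (b - 1) / (b - c)) / (1 - c) = (- ((1 - c) * (b - 1))) / ((b - c) * (1 - c))" by simp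
    also have "... = (1 - b) / (b - c)" by (rule div_eq_div, use d in simp, use d in simp, simp add: algebra_simps)
    finally show ?thesis .
  qed
  have "PP 1 b B = (B - b * cnj B) / (1 - b)" unfolding PP_def by simp
  also have "B - b * cnj B = c * (1 - b) / (b - c) - b * (1 - b) / (b - c)" unfolding cB unfolding B by simp
  also have "... = (c - b) * (1 - b) / (b - c)" by (metis diff_divide_distrib left_diff_distrib)
  also have "(c - b) * (1 - b) / (b - c) / (1 - b) = ((c - b) * (1 - b)) / ((b - c) * (1 - b))" by simp
  also have "... = (-1) / 1" by (rule div_eq_div, use d in simp, use d in simp, simp add: algebra_simps)
  finally show ?thesis unfolding A_def B_def by simp
qed

lemma calc_two: assumes "cnj b = inverse b" "cnj c = inverse c" "b \<noteq> 0" "c \<noteq> 0"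
  "b \<noteq> c" "b \<noteq> 1" "c \<noteq> 1"
  shows "PP 1 c (1 + PP b 1 (PP b c 1 - 1)) = 2"
proof -
  have d: "b - c \<noteq> 0" "c - b \<noteq> 0" "c - 1 \<noteq> 0" "1 - c \<noteq> 0" "1 - b \<noteq> 0" "b - 1 \<noteq> 0"
    using assms by auto
  define A where "A = PP b c 1"
  have A: "A = b * (1 - c) / (b - c)" unfolding A_def PP_def by simp
  have cA: "cnj A = (1 - c) / (b - c)"
  proof -
    have "cnj A = (c - 1) / (c - b)" unfolding A_def using cnj_PP[of b c 1] assms by simp
    then show ?thesis by (metis minus_diff_eq minus_divide_divide)
  qed
  have D1: "A - 1 = c * (1 - b) / (b - c)"
  proof -
    have "A - 1 = A - (b - c) / (b - c)" using d by simp
    also have "... = (b * (1 - c) - (b - c)) / (b - c)" unfolding A by (simp add: diff_divide_distrib)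
    finally show ?thesis by (simp add: algebra_simps)
  qed
  have cD1: "cnj (A - 1) = (1 - b) / (b - c)"
  proof -
    have "cnj (A - 1) = cnj A - (b - c) / (b - c)" using d by simp
    also have "... = ((1 - c) - (b - c)) / (b - c)" unfolding cA by (simp only: diff_divide_distrib)
    also have "(1 - c) - (b - c) = 1 - b" by simp
    finally show ?thesis .
  qed
  have P: "PP b 1 (A - 1) = A"
  proof -
    have "PP b 1 (A - 1) = b * ((A - 1) - cnj (A - 1)) / (b - 1)" unfolding PP_def by simp
    also have "(A - 1) - cnj (A - 1) = c * (1 - b) / (b - c) - (1 - b) / (b - c)" unfolding cD1 unfolding D1 by simp
    also have "... = (c * (1 - b) - (1 - b)) / (b - c)" by (simp add: diff_divide_distrib)
    also have "b * ((c * (1 - b) - (1 - b)) / (b - c)) / (b - 1) = (b * (c * (1 - b) - (1 - b))) / ((b - c) * (b - 1))"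
      by simp
    also have "... = b * (1 - c) / (b - c)"
      by (rule div_eq_div, use d in simp, use d in simp, simp add: algebra_simps)
    finally show ?thesis unfolding A .
  qed
  have "PP 1 c (1 + A) = ((1 + A) - c * (1 + cnj A)) / (1 - c)" unfolding PP_def by simp
  also have "(1 + A) - c * (1 + cnj A) = (1 - c) + b * (1 - c) / (b - c) - c * (1 - c) / (b - c)"
    unfolding cA unfolding A by (simp add: algebra_simps)
  also have "... = (1 - c) + (b * (1 - c) - c * (1 - c)) / (b - c)" by (simp add: diff_divide_distrib)
  also have "(b * (1 - c) - c * (1 - c)) = (b - c) * (1 - c)" by (simp add: algebra_simps)
  also have "(1 - c) + (b - c) * (1 - c) / (b - c) = 2 * (1 - c)" using d by simp
  also have "2 * (1 - c) / (1 - c) = 2" using d(4) by (metis nonzero_mult_div_cancel_right)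
  finally show ?thesis unfolding P A_def[symmetric] .
qed

definition G2 :: "complex set \<Rightarrow> complex set" where
  "G2 W = {(1 - a) / (1 - b) | a b. a \<in> (\<lambda>u. u\<^sup>2) ` W \<and> b \<in> (\<lambda>u. u\<^sup>2) ` W \<and> b \<noteq> 1}"

lemma sa_iff: "same_angle u v \<longleftrightarrow> u^2 = v^2"
  unfolding same_angle_def by (simp add: power2_eq_iff)

lemma FF_0: "FF u v 0 q = PP (u^2) (v^2) q"
  unfolding FF_def PP_def by simp

context
  fixes W :: "complex set"
  assumes AS: "angle_subgroup W"
begin

lemma W_norm: "u \<in> W \<Longrightarrow> norm u = 1" using AS unfolding angle_subgroup_def by auto
lemma W_1: "1 \<in> W" using AS unfolding angle_subgroup_def by auto
lemma W_m1: "-1 \<in> W" using AS unfolding angle_subgroup_def by auto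
lemma W_mult: "u \<in> W \<Longrightarrow> v \<in> W \<Longrightarrow> u * v \<in> W" using AS unfolding angle_subgroup_def by auto
lemma W_inv: "u \<in> W \<Longrightarrow> inverse u \<in> W" using AS unfolding angle_subgroup_def by auto

abbreviation "V \<equiv> (\<lambda>u. u\<^sup>2) ` W"

lemma V_norm: "a \<in> V \<Longrightarrow> norm a = 1" using W_norm by (auto simp: norm_power)
lemma V_nz: "a \<in> V \<Longrightarrow> a \<noteq> 0" using V_norm by fastforce
lemma V_cnj: "a \<in> V \<Longrightarrow> cnj a = inverse a" using V_norm cnj_unit by blast
lemma V_1: "1 \<in> V" using W_1 by force
lemma V_mult: "a \<in> V \<Longrightarrow> b \<in> V \<Longrightarrow> a * b \<in> V"
proof -
  assume "a \<in> V" "b \<in> V"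
  then obtain u v where "u \<in> W" "v \<in> W" "a = u^2" "b = v^2" by blast
  then show ?thesis using W_mult[of u v] by (metis image_eqI power_mult_distrib)
qed
lemma V_inv: "a \<in> V \<Longrightarrow> inverse a \<in> V"
proof -
  assume "a \<in> V"
  then obtain u where "u \<in> W" "a = u^2" by blast
  then show ?thesis using W_inv[of u] by (metis image_eqI power_inverse)
qed

lemma G2_elim: assumes "g \<in> G2 W" obtains s t where "s \<in> V" "t \<in> V" "t \<noteq> 1" "g = (1 - s) / (1 - t)"
  using assms unfolding G2_def by blast

lemma G2_intro: "s \<in> V \<Longrightarrow> t \<in> V \<Longrightarrow> t \<noteq> 1 \<Longrightarrow> (1 - s) / (1 - t) \<in> G2 W"
  unfolding G2_def by blast

lemma V_gen: assumes "a \<in> V" shows "a \<in> gen (G2 W)"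
proof (cases "a = 1")
  case True then show ?thesis by (simp add: g1)
next
  case False
  have a0: "a \<noteq> 0" using V_nz assms by blast
  have "inverse a \<noteq> 1" using False by (metis inverse_1 inverse_inverse_eq)
  then have "(1 - a) / (1 - inverse a) \<in> G2 W" using G2_intro V_inv assms by blast
  moreover have "(1 - a) / (1 - inverse a) = - a"
  proof -
    have "1 - inverse a = (a - 1) / a" using a0 by (simp add: field_simps)
    then show ?thesis using a0 False by (simp add: field_simps)
  qed
  ultimately have "- a * 1 \<in> gen (G2 W)" using gmul g1 by metis
  then show ?thesis using gneg by fastforce
qed

lemma P_gen: "d \<in> gen (G2 W) \<Longrightarrow> \<forall>x a b. x \<in> V \<longrightarrow> a \<in> V \<longrightarrow> b \<in> V \<longrightarrow> a \<noteq> b \<longrightarrow>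
   (d - x * cnj d) / (a - b) \<in> gen (G2 W)"
proof (induction d rule: gen.induct)
  case g0 then show ?case by (simp add: gen.g0)
next
  case g1
  show ?case
  proof (intro allI impI)
    fix x a b assume x: "x \<in> V" and a: "a \<in> V" and b: "b \<in> V" and ab: "a \<noteq> b"
    have a0: "a \<noteq> 0" using V_nz a by blast
    have ba: "b * inverse a \<in> V" using V_mult V_inv a b by blast
    have ba1: "b * inverse a \<noteq> 1" using ab a0 by (simp flip: divide_inverse)
    have g: "(1 - x) / (1 - b * inverse a) \<in> G2 W" using G2_intro x ba ba1 by blast
    have e: "a - b = a * (1 - b * inverse a)" using a0 by (simp add: algebra_simps)
    have "(1 - x * cnj 1) / (a - b) = (1 - x) / (a * (1 - b * inverse a))"
      unfolding e by simp
    also have "... = (1 - x) / (1 - b * inverse a) / a" by (simp add: mult.commute)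
    also have "... = (1 - x) / (1 - b * inverse a) * inverse a" by (simp only: divide_inverse)
    finally have eq: "(1 - x * cnj 1) / (a - b) = (1 - x) / (1 - b * inverse a) * inverse a" .
    show "(1 - x * cnj 1) / (a - b) \<in> gen (G2 W)"
      unfolding eq by (rule gen.gmul[OF g V_gen[OF V_inv[OF a]]])
  qed
next
  case (gadd d1 d2)
  show ?case
  proof (intro allI impI)
    fix x a b assume h: "x \<in> V" "a \<in> V" "b \<in> V" "a \<noteq> b"
    have "(d1 + d2 - x * cnj (d1 + d2)) / (a - b) = (d1 - x * cnj d1) / (a - b) + (d2 - x * cnj d2) / (a - b)"
      unfolding add_divide_distrib[symmetric] by (rule arg_cong[where f="\<lambda>z. z / (a - b)"]) (simp add: algebra_simps)
    then show "(d1 + d2 - x * cnj (d1 + d2)) / (a - b) \<in> gen (G2 W)"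
      using gen.gadd[OF gadd.IH(1)[rule_format, OF h] gadd.IH(2)[rule_format, OF h]] by simp
  qed
next
  case (gneg d)
  show ?case
  proof (intro allI impI)
    fix x a b assume h: "x \<in> V" "a \<in> V" "b \<in> V" "a \<noteq> b"
    have "(- d - x * cnj (- d)) / (a - b) = - ((d - x * cnj d) / (a - b))"
      by (simp add: minus_divide_left minus_diff_eq)
    then show "(- d - x * cnj (- d)) / (a - b) \<in> gen (G2 W)"
      using gen.gneg[OF gneg.IH[rule_format, OF h]] by simp
  qed
next
  case (gmul g d)
  obtain s t where st: "s \<in> V" "t \<in> V" "t \<noteq> 1" "g = (1 - s) / (1 - t)"
    using G2_elim[OF gmul.hyps(1)] by blast
  have s0: "s \<noteq> 0" "t \<noteq> 0" using V_nz st by auto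
  have t1: "1 - t \<noteq> 0" "t - 1 \<noteq> 0" using st by auto
  have cg: "cnj g = g * (t * inverse s)"
  proof -
    have "cnj g = (1 - inverse s) / (1 - inverse t)" using st V_cnj by simp
    also have "1 - inverse s = (s - 1) / s" using s0 by (simp add: field_simps)
    also have "1 - inverse t = (t - 1) / t" using s0 by (simp add: field_simps)
    also have "(s - 1) / s / ((t - 1) / t) = ((s - 1) * t) / (s * (t - 1))" using s0 by simp
    also have "... = ((1 - s) * t) / ((1 - t) * s)"
      by (rule div_eq_div, use s0 t1 in simp, use s0 t1 in simp, simp add: algebra_simps)
    also have "... = g * (t * inverse s)" unfolding st(4) by (simp add: divide_inverse mult_ac)
    finally show ?thesis .
  qed
  show ?case
  proof (intro allI impI)
    fix x a b assume h: "x \<in> V" "a \<in> V" "b \<in> V" "a \<noteq> b"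
    have x': "x * (t * inverse s) \<in> V" using V_mult[OF h(1) V_mult[OF st(2) V_inv[OF st(1)]]] .
    have eq2: "(g * d - x * cnj (g * d)) / (a - b) = g * ((d - (x * (t * inverse s)) * cnj d) / (a - b))"
    proof -
      have "g * d - x * cnj (g * d) = g * (d - (x * (t * inverse s)) * cnj d)"
        unfolding complex_cnj_mult cg by (simp add: algebra_simps)
      then show ?thesis by simp
    qed
    show "(g * d - x * cnj (g * d)) / (a - b) \<in> gen (G2 W)"
      unfolding eq2 by (rule gen.gmul[OF gmul.hyps(1) gmul.IH[rule_format, OF x' h(2-4)]])
  qed
qed


lemma FF_PP: "FF u v p q = p + PP (u^2) (v^2) (q - p)"
  unfolding FF_def PP_def by simp

lemma W_sq_ne: "u \<in> W \<Longrightarrow> v \<in> W \<Longrightarrow> \<not> same_angle u v \<Longrightarrow> u^2 \<noteq> v^2"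
  using sa_iff by blast

lemma RU_gen: "z \<in> RU W \<Longrightarrow> z \<in> gen (G2 W)"
proof (induction rule: RU.induct)
  case zero then show ?case by (rule gen.g0)
next
  case one then show ?case by (rule gen.g1)
next
  case (isect p q u v)
  have uv: "u^2 \<noteq> v^2" using isect.hyps W_sq_ne by blast
  have e: "isect u v p q = p + u^2 * (((q - p) - v^2 * cnj (q - p)) / (u^2 - v^2))"
    using isect_formula[OF W_norm[OF isect.hyps(3)] W_norm[OF isect.hyps(4)] uv] unfolding FF_def by simp
  have X: "((q - p) - v^2 * cnj (q - p)) / (u^2 - v^2) \<in> gen (G2 W)"
    using P_gen[OF gen_diff[OF isect.IH(2) isect.IH(1)]] isect.hyps(3,4) uv by blast
  have U: "u^2 \<in> gen (G2 W)" using V_gen isect.hyps(3) by blast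
  show ?case unfolding e by (rule gen.gadd[OF isect.IH(1) gen_mult[OF U X]])
qed

lemma RU_scale: assumes l: "l \<in> RU W" and w: "w \<in> W" and lr: "l = complex_of_real r * w"
  shows "z \<in> RU W \<Longrightarrow> l * z \<in> RU W"
proof (induction rule: RU.induct)
  case zero then show ?case by (simp add: RU.zero)
next
  case one then show ?case using l by simp
next
  case (isect p q u v)
  have uv: "u^2 \<noteq> v^2" using isect.hyps W_sq_ne by blast
  have w0: "w \<noteq> 0" using W_norm[OF w] by auto
  have e: "l * isect u v p q = isect (w*u) (w*v) (l*p) (l*q)"
    unfolding lr using isect_scale[OF W_norm[OF isect.hyps(3)] W_norm[OF isect.hyps(4)] uv W_norm[OF w]]
    by (simp add: mult.assoc)
  have na: "\<not> same_angle (w*u) (w*v)" unfolding sa_iff using uv w0 by (simp add: power_mult_distrib)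
  show ?case unfolding e
    by (rule RU.isect[OF isect.IH W_mult[OF w isect.hyps(3)] W_mult[OF w isect.hyps(4)] na])
qed

lemma RU_neg: assumes "-1 \<in> RU W" "z \<in> RU W" shows "- z \<in> RU W"
  using RU_scale[OF assms(1) W_1, of "-1", OF _ assms(2)] by simp

lemma RU_plus1: assumes two: "2 \<in> RU W" shows "z \<in> RU W \<Longrightarrow> z + 1 \<in> RU W"
proof (induction rule: RU.induct)
  case zero then show ?case by (simp add: RU.one)
next
  case one then show ?case using two by simp
next
  case (isect p q u v)
  have uv: "u^2 \<noteq> v^2" using isect.hyps W_sq_ne by blast
  have e: "isect u v p q + 1 = isect u v (p + 1) (q + 1)"
    using isect_trans[OF W_norm[OF isect.hyps(3)] W_norm[OF isect.hyps(4)] uv] by simp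
  show ?case unfolding e by (rule RU.isect[OF isect.IH isect.hyps(3,4,5)])
qed

lemma RU_add: assumes two: "2 \<in> RU W" shows "t \<in> RU W \<Longrightarrow> \<forall>z. z \<in> RU W \<longrightarrow> z + t \<in> RU W"
proof (induction rule: RU.induct)
  case zero then show ?case by simp
next
  case one then show ?case using RU_plus1[OF two] by blast
next
  case (isect p q u v)
  have uv: "u^2 \<noteq> v^2" using isect.hyps W_sq_ne by blast
  show ?case
  proof (intro allI impI)
    fix z assume z: "z \<in> RU W"
    have e: "z + isect u v p q = isect u v (p + z) (q + z)"
      using isect_trans[OF W_norm[OF isect.hyps(3)] W_norm[OF isect.hyps(4)] uv, of p z q] by (metis add.commute)
    have "p + z \<in> RU W" "q + z \<in> RU W" using isect.IH z by (auto simp: add.commute)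
    then show "z + isect u v p q \<in> RU W" unfolding e by (rule RU.isect[OF _ _ isect.hyps(3,4,5)])
  qed
qed

lemma cnj_frac: assumes st: "s \<in> V" "t \<in> V" "t \<noteq> 1"
  shows "cnj ((1 - s) / (1 - t)) = (1 - s) / (1 - t) * (t * inverse s)"
proof -
  have s0: "s \<noteq> 0" "t \<noteq> 0" using V_nz st by auto
  have t1: "1 - t \<noteq> 0" "t - 1 \<noteq> 0" using st by auto
  have "cnj ((1 - s) / (1 - t)) = (1 - inverse s) / (1 - inverse t)" using st V_cnj by simp
  also have "1 - inverse s = (s - 1) / s" using s0 by (simp add: field_simps)
  also have "1 - inverse t = (t - 1) / t" using s0 by (simp add: field_simps)
  also have "(s - 1) / s / ((t - 1) / t) = ((s - 1) * t) / (s * (t - 1))" using s0 by simp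
  also have "... = ((1 - s) * t) / ((1 - t) * s)"
    by (rule div_eq_div, use s0 t1 in simp, use s0 t1 in simp, simp add: algebra_simps)
  also have "... = (1 - s) / (1 - t) * (t * inverse s)" by (simp add: divide_inverse mult_ac)
  finally show ?thesis .
qed

lemma G2_RU: assumes g: "g \<in> G2 W"
  shows "g \<in> RU W \<and> (\<exists>r w. w \<in> W \<and> g = complex_of_real r * w)"
proof -
  obtain s t where st: "s \<in> V" "t \<in> V" "t \<noteq> 1" "g = (1 - s) / (1 - t)"
    using G2_elim[OF g] by blast
  obtain \<sigma> \<tau> where sg: "\<sigma> \<in> W" "\<tau> \<in> W" "s = \<sigma>^2" "t = \<tau>^2" using st by blast
  have s0: "s \<noteq> 0" "t \<noteq> 0" using V_nz st by auto
  have g0: "\<sigma> \<noteq> 0" "\<tau> \<noteq> 0" using W_norm[OF sg(1)] W_norm[OF sg(2)] by auto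
  define w where "w = \<sigma> * inverse \<tau>"
  have wW: "w \<in> W" unfolding w_def using W_mult W_inv sg by blast
  have w2: "w^2 = s * inverse t" unfolding w_def sg by (simp add: power_mult_distrib power_inverse)
  have ws: "w^2 \<noteq> \<sigma>^2"
  proof
    assume "w^2 = \<sigma>^2"
    then have "s * inverse t = s * 1" using w2 sg by simp
    then have "inverse t = 1" using s0 by (metis mult_left_cancel)
    then show False using st(3) by (metis inverse_1 inverse_inverse_eq)
  qed
  have "isect w \<sigma> 0 1 = PP (w^2) (\<sigma>^2) 1"
    using isect_formula[OF W_norm[OF wW] W_norm[OF sg(1)] ws] FF_0 by simp
  also have "... = (s * inverse t) * (1 - s) / (s * inverse t - s)" unfolding PP_def w2 sg(3)[symmetric] by simp
  also have "s * inverse t - s = (s * inverse t) * (1 - t)" using s0 by (simp add: algebra_simps)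
  also have "(s * inverse t) * (1 - s) / ((s * inverse t) * (1 - t)) = g" unfolding st(4) using s0 by simp
  finally have gi: "isect w \<sigma> 0 1 = g" .
  have inR: "g \<in> RU W" unfolding gi[symmetric]
    by (rule RU.isect[OF RU.zero RU.one wW sg(1)]) (use ws sa_iff in blast)
  have cw: "cnj w = inverse w" using cnj_unit W_norm wW by blast
  have "cnj (g * inverse w) = g * (t * inverse s) * w" unfolding complex_cnj_mult complex_cnj_inverse cw
    using cnj_frac[OF st(1-3)] st(4) by simp
  also have "... = g * inverse w" unfolding w_def sg using g0 by (simp add: field_simps power2_eq_square)
  finally obtain r where "g * inverse w = complex_of_real r" using real_of_cnj by blast
  moreover have "w \<noteq> 0" using W_norm[OF wW] by auto
  ultimately have "g = complex_of_real r * w" by (metis divide_inverse nonzero_eq_divide_eq)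
  then show ?thesis using inR wW by blast
qed


lemma consts_RU:
  assumes H: "\<exists>u1\<in>W. \<exists>u2\<in>W. \<exists>u3\<in>W. \<not> same_angle u1 u2 \<and> \<not> same_angle u1 u3 \<and> \<not> same_angle u2 u3"
  shows "-1 \<in> RU W" "2 \<in> RU W"
proof -
  obtain u1 u2 u3 where u: "u1 \<in> W" "u2 \<in> W" "u3 \<in> W"
    and n: "u1^2 \<noteq> u2^2" "u1^2 \<noteq> u3^2" "u2^2 \<noteq> u3^2"
    using H unfolding sa_iff by blast
  have z1: "u1 \<noteq> 0" using W_norm[OF u(1)] by auto
  define v where "v = u2 * inverse u1"
  define w where "w = u3 * inverse u1"
  have vW: "v \<in> W" "w \<in> W" unfolding v_def w_def using W_mult W_inv u by blast+
  have v2: "v^2 = u2^2 * inverse (u1^2)" "w^2 = u3^2 * inverse (u1^2)"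
    unfolding v_def w_def by (simp_all add: power_mult_distrib power_inverse)
  have z2: "u1^2 \<noteq> 0" using z1 by simp
  have b1: "v^2 \<noteq> 1" unfolding v2 using n z2 by (metis divide_inverse divide_self_if right_inverse_eq)
  have c1: "w^2 \<noteq> 1" unfolding v2 using n z2 by (metis divide_inverse divide_self_if right_inverse_eq)
  have bc: "v^2 \<noteq> w^2" unfolding v2 using n z2 by (metis mult_right_cancel inverse_nonzero_iff_nonzero)
  have W1: "1 \<in> W" by (rule W_1)
  have nv: "norm v = 1" "norm w = 1" "norm (1::complex) = 1" using W_norm vW by auto
  have bV: "v^2 \<in> V" "w^2 \<in> V" using vW by auto
  have cb: "cnj (v^2) = inverse (v^2)" "cnj (w^2) = inverse (w^2)" by (rule V_cnj[OF bV(1)], rule V_cnj[OF bV(2)])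
  have nz: "v^2 \<noteq> 0" "w^2 \<noteq> 0" by (rule V_nz[OF bV(1)], rule V_nz[OF bV(2)])
  have sq1: "(1::complex)^2 = 1" by simp
  have i1: "\<And>a b q. a \<in> W \<Longrightarrow> b \<in> W \<Longrightarrow> a^2 \<noteq> b^2 \<Longrightarrow> isect a b 0 q = PP (a^2) (b^2) q"
    using isect_formula W_norm FF_0 by metis
  have i2: "\<And>a b q. a \<in> W \<Longrightarrow> b \<in> W \<Longrightarrow> a^2 \<noteq> b^2 \<Longrightarrow> isect a b 1 q = 1 + PP (a^2) (b^2) (q - 1)"
    using isect_formula W_norm FF_PP by metis
  have ns: "\<And>a b. a^2 \<noteq> b^2 \<Longrightarrow> \<not> same_angle a b" using sa_iff by blast
  define A where "A = isect v w 0 1"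
  have AR: "A \<in> RU W" unfolding A_def by (rule RU.isect[OF RU.zero RU.one vW ns[OF bc]])
  have Ae: "A = PP (v^2) (w^2) 1" unfolding A_def using i1[OF vW bc] .
  define B where "B = isect w 1 0 A"
  have BR: "B \<in> RU W" unfolding B_def by (rule RU.isect[OF RU.zero AR vW(2) W1 ns]) (use c1 in simp)
  have Be: "B = PP (w^2) 1 A" unfolding B_def using i1[OF vW(2) W1, of A] c1 by simp
  define C where "C = isect 1 v 0 B"
  have CR: "C \<in> RU W" unfolding C_def by (rule RU.isect[OF RU.zero BR W1 vW(1) ns]) (use b1 in simp)
  have Ce: "C = PP 1 (v^2) B" unfolding C_def using i1[OF W1 vW(1), of B] b1 by simp
  have "C = -1" unfolding Ce Be Ae
    by (rule calc_m1[OF cb nz bc b1 c1])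
  then show "-1 \<in> RU W" using CR by simp
  define E where "E = isect v 1 1 A"
  have ER: "E \<in> RU W" unfolding E_def by (rule RU.isect[OF RU.one AR vW(1) W1 ns]) (use b1 in simp)
  have Ee: "E = 1 + PP (v^2) 1 (A - 1)" unfolding E_def using i2[OF vW(1) W1, of A] b1 by simp
  define F where "F = isect 1 w 0 E"
  have FR: "F \<in> RU W" unfolding F_def by (rule RU.isect[OF RU.zero ER W1 vW(2) ns]) (use c1 in simp)
  have Fe: "F = PP 1 (w^2) E" unfolding F_def using i1[OF W1 vW(2), of E] c1 by simp
  have "F = 2" unfolding Fe Ee Ae
    by (rule calc_two[OF cb nz bc b1 c1])
  then show "2 \<in> RU W" using FR by simp
qed

lemma gen_RU:
  assumes H: "\<exists>u1\<in>W. \<exists>u2\<in>W. \<exists>u3\<in>W. \<not> same_angle u1 u2 \<and> \<not> same_angle u1 u3 \<and> \<not> same_angle u2 u3"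
  shows "z \<in> gen (G2 W) \<Longrightarrow> z \<in> RU W"
proof (induction rule: gen.induct)
  case g0 then show ?case by (rule RU.zero)
next
  case g1 then show ?case by (rule RU.one)
next
  case (gadd x y) then show ?case using RU_add[OF consts_RU(2)[OF H]] by blast
next
  case (gneg x) then show ?case using RU_neg[OF consts_RU(1)[OF H]] by blast
next
  case (gmul g x)
  obtain r w where "g \<in> RU W" "w \<in> W" "g = complex_of_real r * w" using G2_RU[OF gmul.hyps(1)] by blast
  then show ?case using RU_scale gmul.IH by blast
qed

end

theorem theorem1:
  fixes W :: "complex set"
  assumes "angle_subgroup W"
    and "\<exists>u1\<in>W. \<exists>u2\<in>W. \<exists>u3\<in>W. \<not> same_angle u1 u2 \<and> \<not> same_angle u1 u3 \<and> \<not> same_angle u2 u3"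
  shows "is_subring (RU W) \<and>
         RU W = int_comb_prods {(1 - u\<^sup>2) / (1 - v\<^sup>2) | u v. u \<in> W \<and> v \<in> W \<and> v\<^sup>2 \<noteq> 1} \<and>
         RU W = int_comb_prods {(1 - a) / (1 - b) | a b. a \<in> (\<lambda>u. u\<^sup>2) ` W \<and> b \<in> (\<lambda>u. u\<^sup>2) ` W \<and> b \<noteq> 1}"
proof -
  have eq: "RU W = gen (G2 W)" using RU_gen[OF assms(1)] gen_RU[OF assms(1) assms(2)] by blast
  have sub: "is_subring (gen (G2 W))" unfolding is_subring_def by (auto intro: gen.intros gen_mult)
  have G1: "{(1 - u\<^sup>2) / (1 - v\<^sup>2) | u v. u \<in> W \<and> v \<in> W \<and> v\<^sup>2 \<noteq> 1} = G2 W"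
    unfolding G2_def by blast
  have G2': "{(1 - a) / (1 - b) | a b. a \<in> (\<lambda>u. u\<^sup>2) ` W \<and> b \<in> (\<lambda>u. u\<^sup>2) ` W \<and> b \<noteq> 1} = G2 W"
    unfolding G2_def by (rule refl)
  show ?thesis unfolding G1 G2' ICP_eq_gen eq using sub by simp
qed

end
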